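(* Let $n\ge1$ and let $\delta_1,\ldots,\delta_n>0$ with $\min_j\delta_j<\max_j\delta_j$. Then for every $\xi>0$, $$\int_0^\infty s^{n-1}\prod_{j=1}^n(1+\delta_js)^{-1-\xi}\,ds<\frac{B(n,n\xi)}{\prod_{j=1}^n\delta_j},$$ where $B(\cdot,\cdot)$ is the beta function. *)

theory Defs
  imports "HOL-Analysis.Analysis"
begin

end

theory Submission
  imports Defs "HOL-Real_Asymp.Real_Asymp"
begin
lemma beta_set_integrable:
  fixes b :: real and n :: nat
  assumes b: "b > 0" and n: "n \<ge> 1"
  shows "set_integrable lborel {0<..<1} (\<lambda>u::real. u powr (real n - 1) * (1-u) powr (b-1))"
    "(LBINT u:{0<..<1}. u powr (real n - 1) * (1-u) powr (b-1)) = Beta (real n) b"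
proof -
  let ?B = "\<lambda>u::real. u powr (real n - 1) * (1-u) powr (b-1)"
  have hi: "(?B has_integral Beta (real n) b) {0<..<1}"
    using has_integral_Beta_real[of "real n" b] b n by (simp add: has_integral_Icc_iff_Ioo)
  have "?B absolutely_integrable_on {0<..<1}"
    using hi by (intro nonnegative_absolutely_integrable_1) (auto simp: has_integral_integrable)
  then have "integrable lebesgue (\<lambda>x. indicator {0<..<1::real} x *\<^sub>R ?B x)"
    by (simp add: set_integrable_def)
  moreover have "(\<lambda>x. indicator {0<..<1::real} x *\<^sub>R ?B x) \<in> borel_measurable lborel"
    by measurable
  ultimately have "integrable lborel (\<lambda>x. indicator {0<..<1::real} x *\<^sub>R ?B x)"
    using integrable_completion by blast
  then show si: "set_integrable lborel {0<..<1} ?B" by (simp add: set_integrable_def)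
  show "(LBINT u:{0<..<1}. ?B u) = Beta (real n) b"
    using set_borel_integral_eq_integral(2)[OF si] hi integral_unique by metis
qed

lemma beta_inf:
  fixes c b :: real and n :: nat
  assumes c: "c > 0" and b: "b > 0" and n: "n \<ge> 1"
  shows "set_integrable lborel {0<..} (\<lambda>s::real. s ^ (n - 1) * (1 + c * s) powr (- (real n + b)))"
    "(LBINT s:{0<..}. s ^ (n - 1) * (1 + c * s) powr (- (real n + b))) = Beta (real n) b / c^n"
proof -
  define F where "F = (\<lambda>s::real. s ^ (n - 1) * (1 + c * s) powr (- (real n + b)))"
  define g where "g = (\<lambda>u::real. u / (c*(1-u)))"
  define g' where "g' = (\<lambda>u::real. 1 / (c*(1-u)^2))"
  define B where "B = (\<lambda>u::real. u powr (real n - 1) * (1-u) powr (b-1) / c^n)"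
  have eq: "F (g u) * g' u = B u" if u: "0<u" "u<1" for u
  proof -
    obtain m where m: "n = Suc m" using n by (cases n) auto
    have 1: "1 + c * (u / (c * (1 - u))) = 1/(1-u)" using u c by (simp add: field_simps)
    have 2: "(1/(1-u)) powr (-(real n + b)) = (1-u) powr (real m + 1 + b)"
    proof -
      have "(1/(1-u)) powr (-(real n + b)) = 1 / ((1/(1-u)) powr (real n + b))"
        by (rule powr_minus_divide)
      also have "\<dots> = (1-u) powr (real n + b)" using u by (simp add: powr_divide)
      finally show ?thesis by (simp add: m algebra_simps)
    qed
    have 3: "(1-u) powr (real m + 1 + b) = (1-u)^m * (1-u)^2 * (1-u) powr (b - 1)"
    proof -
      have "(1-u) powr (real m + 1 + b) = (1-u) powr (real m) * (1-u) powr (real 2) * (1-u) powr (b - 1)"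
        by (simp add: powr_add[symmetric] add_ac)
      also have "\<dots> = (1-u)^m * (1-u)^2 * (1-u) powr (b - 1)"
        using u by (simp only: powr_realpow)
      finally show ?thesis .
    qed
    have 4: "u powr (real n - 1) = u^m" using u by (simp add: m powr_realpow)
    have 5: "F (g u) = (u / (c * (1 - u)))^m * ((1-u)^m * (1-u)^2 * (1-u) powr (b - 1))"
      unfolding F_def g_def 1 2 3 by (simp add: m)
    have 6: "(u / (c * (1 - u)))^m * ((1-u)^m * (1-u)^2 * (1-u) powr (b - 1)) * (1 / (c*(1-u)^2))
       = u^m * (1-u) powr (b-1) / c^n"
      using u c by (simp add: m power_divide power_mult_distrib[symmetric] field_simps)
    show ?thesis unfolding 5 B_def 4 g'_def 6 by simp
  qed
  have E01: "einterval (0::ereal) 1 = {0<..<1}" by (simp add: zero_ereal_def one_ereal_def)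
  have E0i: "einterval (0::ereal) \<infinity> = {0<..}" by (simp add: zero_ereal_def)
  have Bi: "set_integrable lborel {0<..<1} B"
    unfolding B_def by (rule set_integrable_divide, rule beta_set_integrable(1)[OF b n])
  have Bv: "(LBINT u:{0<..<1}. B u) = Beta (real n) b / c^n"
    unfolding B_def set_integral_divide_zero beta_set_integrable(2)[OF b n] ..
  have FGi: "set_integrable lborel (einterval 0 1) (\<lambda>x. F (g x) * g' x)"
    unfolding E01 using Bi by (rule set_integrable_cong[THEN iffD2, rotated -1]) (auto simp: eq)
  have FGv: "(LBINT x:einterval 0 1. F (g x) * g' x) = Beta (real n) b / c^n"
    unfolding E01 Bv[symmetric] by (rule set_lebesgue_integral_cong) (auto simp: eq)
  have lim1: "LIM x at_left 1. g x :> at_top"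
    unfolding g_def using c by real_asymp
  have lim0: "(g \<longlongrightarrow> 0) (at_right 0)"
    unfolding g_def using c by real_asymp
  have contF: "isCont F s" if "s > 0" for s
  proof -
    have "1 + c * s \<noteq> 0" using that c by (smt (verit) mult_pos_pos)
    then show ?thesis unfolding F_def by (intro continuous_intros) auto
  qed
  note sub = interval_integral_substitution_nonneg[of 0 1 g g' F 0 \<infinity>]
  have P2: "(g has_real_derivative g' x) (at x)" "isCont F (g x)" "isCont g' x" "0 \<le> F (g x)"
    if x: "0 < ereal x" "ereal x < 1" for x
  proof -
    from x have x': "0 < x" "x < 1" by (auto simp: zero_ereal_def one_ereal_def)
    show "(g has_real_derivative g' x) (at x)"
    proof -
      have nz: "c * (1 - x) \<noteq> 0" using x' c by simp
      have "((\<lambda>u. u / (c*(1-u))) has_real_derivative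
          (1 * (c*(1-x)) - x * (c * (0 - 1))) / ((c*(1-x)) * (c*(1-x)))) (at x)"
        using nz by (intro DERIV_divide) (auto intro!: derivative_eq_intros)
      then show ?thesis unfolding g_def g'_def
      proof (rule DERIV_cong)
        have "(1 * (c*(1-x)) - x * (c * (0 - 1))) / ((c*(1-x)) * (c*(1-x))) = c / (c * (c*(1-x)^2))"
          by (simp add: algebra_simps power2_eq_square)
        also have "\<dots> = 1 / (c*(1-x)^2)" using c by simp
        finally show "(1 * (c*(1-x)) - x * (c * (0 - 1))) / ((c*(1-x)) * (c*(1-x))) = 1 / (c*(1-x)^2)" .
      qed
    qed
    show "isCont F (g x)" using x' c by (intro contF) (simp add: g_def)
    show "isCont g' x" unfolding g'_def using x' c by (intro continuous_intros) auto
    show "0 \<le> F (g x)" unfolding F_def g_def using x' c by simp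
  qed
  have P1: "(0::ereal) < 1" by simp
  have P6: "0 \<le> g' x" for x unfolding g'_def using c by simp
  have P7: "((ereal \<circ> g \<circ> real_of_ereal) \<longlongrightarrow> 0) (at_right 0)"
      using lim0 by (simp add: zero_ereal_def ereal_tendsto_simps)
  have P8: "((ereal \<circ> g \<circ> real_of_ereal) \<longlongrightarrow> \<infinity>) (at_left 1)"
      using lim1 by (simp add: one_ereal_def ereal_tendsto_simps)
  have subst: "set_integrable lborel (einterval 0 \<infinity>) F" "(LBINT x=0..\<infinity>. F x) = (LBINT x=0..1. F (g x) * g' x)"
    using sub[OF P1 P2(1) P2(2) P2(3) P2(4) P6 P7 P8 FGi] by auto
  show "set_integrable lborel {0<..} F" using subst E0i by simp
  show "(LBINT s:{0<..}. F s) = Beta (real n) b / c^n"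
    using subst FGv E0i by (simp add: interval_lebesgue_integral_def)
qed
lemma amgm_prod1:
  fixes x :: "'a \<Rightarrow> real"
  assumes S: "finite S" "S \<noteq> {}" and x: "\<And>i. i \<in> S \<Longrightarrow> x i \<ge> 0"
  shows "(1 + (\<Prod>i\<in>S. x i) powr (1 / card S)) ^ card S \<le> (\<Prod>i\<in>S. 1 + x i)"
proof -
  define P where "P = (\<Prod>i\<in>S. 1 + x i)"
  have Ppos: "P > 0" unfolding P_def using x by (intro prod_pos) (auto simp: add_pos_nonneg)
  have cpos: "card S > 0" using S by (simp add: card_gt_0_iff)
  have y: "(\<Sum>i\<in>S. (1 / (1 + x i)) / card S) \<ge> (\<Prod>i\<in>S. 1 / (1 + x i)) powr (1 / card S)"
    using x by (intro arith_geom_mean S) (auto simp: add_nonneg_nonneg)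
  have z: "(\<Sum>i\<in>S. (x i / (1 + x i)) / card S) \<ge> (\<Prod>i\<in>S. x i / (1 + x i)) powr (1 / card S)"
    using x by (intro arith_geom_mean S) (auto simp: add_nonneg_nonneg)
  have sum1: "(\<Sum>i\<in>S. (1 / (1 + x i)) / card S) + (\<Sum>i\<in>S. (x i / (1 + x i)) / card S) = 1"
  proof -
    have "(\<Sum>i\<in>S. (1 / (1 + x i)) / card S) + (\<Sum>i\<in>S. (x i / (1 + x i)) / card S)
        = (\<Sum>i\<in>S. 1 / card S)"
      unfolding sum.distrib[symmetric]
    proof (rule sum.cong)
      fix i assume "i \<in> S"
      then have "1 + x i \<noteq> 0" using x[of i] by linarith
      then show "1 / (1 + x i) / card S + x i / (1 + x i) / card S = 1 / card S"
        by (simp add: add_divide_distrib[symmetric])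
    qed simp
    also have "\<dots> = 1" using cpos by simp
    finally show ?thesis .
  qed
  have py: "(\<Prod>i\<in>S. 1 / (1 + x i)) = 1 / P" unfolding P_def by (simp add: prod_dividef)
  have pz: "(\<Prod>i\<in>S. x i / (1 + x i)) = (\<Prod>i\<in>S. x i) / P" unfolding P_def by (simp add: prod_dividef)
  have "(1 / P) powr (1 / card S) + ((\<Prod>i\<in>S. x i) / P) powr (1 / card S) \<le> 1"
    using y z sum1 unfolding py pz by linarith
  then have "(1 + (\<Prod>i\<in>S. x i) powr (1 / card S)) / P powr (1 / card S) \<le> 1"
    using Ppos x by (simp add: powr_divide prod_nonneg add_divide_distrib)
  then have le: "1 + (\<Prod>i\<in>S. x i) powr (1 / card S) \<le> P powr (1 / card S)"
    using Ppos by (simp add: divide_le_eq)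
  have "(1 + (\<Prod>i\<in>S. x i) powr (1 / card S)) ^ card S \<le> (P powr (1 / card S)) ^ card S"
    using le by (intro power_mono) (auto intro: add_nonneg_nonneg)
  also have "\<dots> = P"
    using Ppos cpos by (simp add: powr_realpow[symmetric] powr_powr)
  finally show ?thesis unfolding P_def .
qed

lemma prod_split2:
  assumes "finite S" "a \<in> S" "b \<in> S" "a \<noteq> b"
  shows "prod f S = f a * f b * prod f (S - {a, b})"
proof -
  have "prod f S = f a * prod f (S - {a})" using assms by (simp add: prod.remove)
  also have "prod f (S - {a}) = f b * prod f (S - {a} - {b})"
    using assms by (intro prod.remove) auto
  also have "S - {a} - {b} = S - {a, b}" by auto
  finally show ?thesis by (simp add: mult.assoc)
qed

lemma amgm_strict:
  fixes d :: "'a \<Rightarrow> real"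
  assumes S: "finite S" and ab: "a \<in> S" "b \<in> S" "d a \<noteq> d b"
    and d: "\<And>i. i \<in> S \<Longrightarrow> d i > 0" and s: "s > 0"
  shows "(1 + (\<Prod>i\<in>S. d i) powr (1 / card S) * s) ^ card S < (\<Prod>i\<in>S. 1 + d i * s)"
proof -
  have anb: "a \<noteq> b" using ab by auto
  define p where "p = sqrt (d a)"
  define q where "q = sqrt (d b)"
  have pq: "p > 0" "q > 0" "p * p = d a" "q * q = d b"
    using d[OF ab(1)] d[OF ab(2)] by (auto simp: p_def q_def)
  have "p \<noteq> q" using pq ab(3) by auto
  then have "0 < (p - q)^2" by simp
  then have key: "(1 + p * q * s)^2 < (1 + d a * s) * (1 + d b * s)"
  proof -
    assume h: "0 < (p - q)^2"
    have "(1 + d a * s) * (1 + d b * s) - (1 + p * q * s)^2 = s * (p - q)^2"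
      by (simp add: pq(3,4)[symmetric] power2_eq_square algebra_simps)
    also have "\<dots> > 0" using s h by simp
    finally show ?thesis by simp
  qed
  define d' where "d' = d(a := p * q, b := p * q)"
  have d'S: "d' i > 0" if "i \<in> S" for i
    using d[OF that] pq by (auto simp: d'_def)
  have restpos: "(\<Prod>i\<in>S - {a, b}. 1 + d i * s) > 0"
    using d s by (intro prod_pos) (auto intro!: add_pos_pos)
  have rest_eq: "(\<Prod>i\<in>S - {a, b}. f (d' i)) = (\<Prod>i\<in>S - {a, b}. f (d i))" for f :: "real \<Rightarrow> real"
    by (rule prod.cong) (auto simp: d'_def)
  have prodd': "(\<Prod>i\<in>S. d' i) = (\<Prod>i\<in>S. d i)"
    using prod_split2[OF S ab(1,2) anb, of d'] prod_split2[OF S ab(1,2) anb, of d] rest_eq[of "\<lambda>x. x"] anb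
    by (simp add: d'_def pq(3,4)[symmetric] algebra_simps)
  have lt: "(\<Prod>i\<in>S. 1 + d' i * s) < (\<Prod>i\<in>S. 1 + d i * s)"
  proof -
    have "(\<Prod>i\<in>S. 1 + d' i * s) = (1 + p * q * s)^2 * (\<Prod>i\<in>S - {a, b}. 1 + d i * s)"
      using prod_split2[OF S ab(1,2) anb, of "\<lambda>i. 1 + d' i * s"] rest_eq[of "\<lambda>x. 1 + x * s"] anb
      by (simp add: d'_def power2_eq_square)
    also have "\<dots> < (1 + d a * s) * (1 + d b * s) * (\<Prod>i\<in>S - {a, b}. 1 + d i * s)"
      using key restpos by simp
    also have "\<dots> = (\<Prod>i\<in>S. 1 + d i * s)"
      using prod_split2[OF S ab(1,2) anb, of "\<lambda>i. 1 + d i * s"] by simp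
    finally show ?thesis .
  qed
  have ne: "S \<noteq> {}" using ab by auto
  have cpos: "card S > 0" using S ne by (simp add: card_gt_0_iff)
  have am: "(1 + (\<Prod>i\<in>S. d' i * s) powr (1 / card S)) ^ card S \<le> (\<Prod>i\<in>S. 1 + d' i * s)"
    using d'S s by (intro amgm_prod1 S ne) (auto intro: less_imp_le)
  have "(\<Prod>i\<in>S. d' i * s) powr (1 / card S) = ((\<Prod>i\<in>S. d i) * s ^ card S) powr (1 / card S)"
    by (simp add: prod.distrib prodd')
  also have "\<dots> = (\<Prod>i\<in>S. d i) powr (1 / card S) * (s ^ card S) powr (1 / card S)"
    using d s by (intro powr_mult prod_nonneg; auto intro: less_imp_le)
  also have "(s ^ card S) powr (1 / card S) = s"
    using s cpos by (simp add: powr_realpow[symmetric] powr_powr)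
  finally have "(\<Prod>i\<in>S. d' i * s) powr (1 / card S) = (\<Prod>i\<in>S. d i) powr (1 / card S) * s" .
  then show ?thesis using am lt by simp
qed

theorem lemma7:
  fixes n :: nat and \<delta> :: "nat \<Rightarrow> real" and \<xi> :: real
  assumes "n \<ge> 1"
    and "\<And>j. j \<in> {1..n} \<Longrightarrow> \<delta> j > 0"
    and "Min (\<delta> ` {1..n}) < Max (\<delta> ` {1..n})"
    and "\<xi> > 0"
  shows "set_integrable lborel {0<..} (\<lambda>s. s ^ (n - 1) * (\<Prod>j=1..n. (1 + \<delta> j * s) powr (-1 - \<xi>)))
    \<and> (LBINT s:{0<..}. s ^ (n - 1) * (\<Prod>j=1..n. (1 + \<delta> j * s) powr (-1 - \<xi>)))
        < Beta (real n) (real n * \<xi>) / (\<Prod>j=1..n. \<delta> j)"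
proof -
  note n = assms(1) and dpos = assms(2) and mm = assms(3) and xi = assms(4)
  define S where "S = {1..n}"
  have S: "finite S" "S \<noteq> {}" "card S = n" using n by (auto simp: S_def)
  obtain a where a: "a \<in> S" "\<delta> a = Min (\<delta> ` S)"
  proof -
    have "Min (\<delta> ` S) \<in> \<delta> ` S" using S by (intro Min_in) auto
    then show ?thesis using that by (metis imageE)
  qed
  obtain b where b: "b \<in> S" "\<delta> b = Max (\<delta> ` S)"
  proof -
    have "Max (\<delta> ` S) \<in> \<delta> ` S" using S by (intro Max_in) auto
    then show ?thesis using that by (metis imageE)
  qed
  have ab: "\<delta> a \<noteq> \<delta> b" using a b mm unfolding S_def by simp
  define P where "P = (\<Prod>j=1..n. \<delta> j)"
  have Ppos: "P > 0" unfolding P_def using dpos by (intro prod_pos) auto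
  define G where "G = P powr (1 / real n)"
  have Gpos: "G > 0" using Ppos by (simp add: G_def)
  have Gn: "G ^ n = P" using Ppos n by (simp add: G_def powr_realpow[symmetric] powr_powr)
  define f where "f = (\<lambda>s::real. s ^ (n - 1) * (\<Prod>j=1..n. (1 + \<delta> j * s) powr (-1 - \<xi>)))"
  define h where "h = (\<lambda>s::real. s ^ (n - 1) * (1 + G * s) powr (- (real n + real n * \<xi>)))"
  have nxi: "real n * \<xi> > 0" using n xi by simp
  have hi: "set_integrable lborel {0<..} h" unfolding h_def by (rule beta_inf(1)[OF Gpos nxi n])
  have hv: "(LBINT s:{0<..}. h s) = Beta (real n) (real n * \<xi>) / P"
    unfolding h_def beta_inf(2)[OF Gpos nxi n] Gn ..
  have fnn: "0 \<le> f s" if "s > 0" for s unfolding f_def using that by (intro mult_nonneg_nonneg prod_nonneg) auto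
  have flt: "f s < h s" if s: "s > 0" for s
  proof -
    have "(1 + G * s) ^ n < (\<Prod>j\<in>S. 1 + \<delta> j * s)"
      using amgm_strict[OF S(1) a(1) b(1) ab _ s, of] dpos S(3)
      unfolding G_def P_def S_def by auto
    then have "(\<Prod>j\<in>S. 1 + \<delta> j * s) powr (-1 - \<xi>) < ((1 + G * s) ^ n) powr (-1 - \<xi>)"
      using xi Gpos s by (intro powr_less_mono2_neg zero_less_power) (auto intro: add_pos_pos)
    also have "((1 + G * s) ^ n) powr (-1 - \<xi>) = (1 + G * s) powr (- (real n + real n * \<xi>))"
    proof -
      have "1 + G * s > 0" using Gpos s by (simp add: add_pos_pos)
      then have "((1 + G * s) ^ n) powr (-1 - \<xi>) = (1 + G * s) powr (real n * (-1 - \<xi>))"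
        by (simp add: powr_realpow[symmetric] powr_powr)
      then show ?thesis by (simp add: algebra_simps)
    qed
    finally have "(\<Prod>j\<in>S. (1 + \<delta> j * s) powr (-1 - \<xi>)) < (1 + G * s) powr (- (real n + real n * \<xi>))"
      by (simp add: prod_powr_distrib)
    then show ?thesis unfolding f_def h_def S_def using s by simp
  qed
  have fm: "set_borel_measurable lborel {0<..} f"
    unfolding set_borel_measurable_def f_def by measurable
  have fi: "set_integrable lborel {0<..} f"
  proof (rule set_integrable_bound[OF hi fm])
    show "AE x in lborel. x \<in> {0<..} \<longrightarrow> norm (f x) \<le> norm (h x)"
    proof (intro AE_I2 impI)
      fix x :: real assume "x \<in> {0<..}"
      then have "0 \<le> f x" "f x < h x" using fnn flt by auto
      then show "norm (f x) \<le> norm (h x)" by simp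
    qed
  qed
  have le: "(LBINT s:{0<..}. f s) \<le> (LBINT s:{0<..}. h s)"
    using fi hi flt by (intro set_integral_mono) (auto intro: less_imp_le)
  have ne: "(LBINT s:{0<..}. f s) \<noteq> (LBINT s:{0<..}. h s)"
  proof
    assume eq: "(LBINT s:{0<..}. f s) = (LBINT s:{0<..}. h s)"
    define D where "D = (\<lambda>x. indicator {(0::real)<..} x *\<^sub>R (h x - f x))"
    have Di: "integrable lborel D"
      using set_integral_diff(1)[OF hi fi] unfolding D_def set_integrable_def .
    have "(LBINT x:{0<..}. D x) = (LBINT x:{0<..}. h x - f x)"
      by (rule set_lebesgue_integral_cong) (auto simp: D_def)
    also have "\<dots> = 0" using set_integral_diff(2)[OF hi fi] eq by simp
    finally have D0: "(LBINT x:{0<..}. D x) = 0" .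
    have "{(0::real)<..} \<in> null_sets lborel"
      by (rule null_if_pos_func_has_zero_int[OF Di _ _ D0]) (auto simp: D_def flt)
    then have "{0<..<1::real} \<in> null_sets lborel"
      by (rule null_sets_subset) auto
    then have "emeasure lborel {(0::real)<..<1} = 0" by auto
    moreover have "emeasure lborel {(0::real)<..<1} = 1"
      using emeasure_lborel_Ioo[of 0 "1::real"] by simp
    ultimately show False by simp
  qed
  show ?thesis
    using fi le ne hv unfolding f_def h_def P_def by auto
qed

end
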